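(* Let $N,d\in\mathbb{N}^*$, $\alpha>0$, $A\in\mathbb{R}_+^{N\times N}$, and $\psi:\mathbb{R}_+\to\mathbb{R}_+$ with $(r_1-r_2)(\psi(r_1)-\psi(r_2))\le0$ for all $r_1,r_2\ge0$ and $0<\psi(r)\le\psi(0)\le1$. Let $\pi$ be a probability measure on $\{1,\dots,N\}$ with $\pi_iA_{ij}=\pi_jA_{ji}$ for all $i\ne j$. Let $(x_i,v_i)_i$ be a solution on $\mathbb{R}_+$ of $$\frac{dx_i}{dt}=v_i,\qquad\frac{dv_i}{dt}=\alpha\sum_{j\ne i}A_{ij}\psi(\|x_j-x_i\|_2)(v_j-v_i)$$ which flocks, i.e. $\sup_{t\ge0}\sup_{i,j}\|x_i(t)-x_j(t)\|_2<+\infty$ and $\sup_{i,j}\|v_i(t)-v_j(t)\|_2\to0$ as $t\to+\infty$. Then $\|v_i(t)-v^*\|_2\to0$ as $t\to+\infty$ for all $i$, where $v^*=\sum_{i=1}^N\pi_iv_i(0)$.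
   Context: $\|\cdot\|_2$ is the Euclidean norm on $\mathbb{R}^d$. *)

theory Defs
  imports "HOL-Analysis.Analysis"
begin

end

theory Submission
  imports Defs
begin

theorem proposition4p5:
  fixes N :: nat and \<alpha> :: real and A :: "nat \<Rightarrow> nat \<Rightarrow> real"
    and \<psi> :: "real \<Rightarrow> real" and \<pi> :: "nat \<Rightarrow> real"
    and x v :: "nat \<Rightarrow> real \<Rightarrow> 'a::euclidean_space"
  assumes N_pos: "N \<ge> 1"
    and alpha_pos: "\<alpha> > 0"
    and A_nonneg: "\<And>i j. i < N \<Longrightarrow> j < N \<Longrightarrow> A i j \<ge> 0"
    and psi_mono: "\<And>r1 r2. r1 \<ge> 0 \<Longrightarrow> r2 \<ge> 0 \<Longrightarrow> (r1 - r2) * (\<psi> r1 - \<psi> r2) \<le> 0"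
    and psi_pos: "\<And>r. r \<ge> 0 \<Longrightarrow> 0 < \<psi> r"
    and psi_le0: "\<And>r. r \<ge> 0 \<Longrightarrow> \<psi> r \<le> \<psi> 0"
    and psi0_le1: "\<psi> 0 \<le> 1"
    and pi_nonneg: "\<And>i. i < N \<Longrightarrow> \<pi> i \<ge> 0"
    and pi_sum: "(\<Sum>i<N. \<pi> i) = 1"
    and pi_rev: "\<And>i j. i < N \<Longrightarrow> j < N \<Longrightarrow> i \<noteq> j \<Longrightarrow> \<pi> i * A i j = \<pi> j * A j i"
    and dx: "\<And>i t. i < N \<Longrightarrow> t \<ge> 0 \<Longrightarrow>
               (x i has_vector_derivative v i t) (at t within {0..})"
    and dv: "\<And>i t. i < N \<Longrightarrow> t \<ge> 0 \<Longrightarrow>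
               (v i has_vector_derivative
                  (\<alpha> *\<^sub>R (\<Sum>j\<in>{..<N} - {i}. (A i j * \<psi> (norm (x j t - x i t))) *\<^sub>R (v j t - v i t))))
               (at t within {0..})"
    and flock_x: "\<exists>B. \<forall>t\<ge>0. \<forall>i<N. \<forall>j<N. norm (x i t - x j t) \<le> B"
    and flock_v: "((\<lambda>t. Max {norm (v i t - v j t) | i j. i < N \<and> j < N}) \<longlongrightarrow> 0) at_top"
  shows "\<forall>i<N. ((\<lambda>t. norm (v i t - (\<Sum>k<N. \<pi> k *\<^sub>R v k 0))) \<longlongrightarrow> 0) at_top"
proof -
  define vs where "vs = (\<Sum>k<N. \<pi> k *\<^sub>R v k 0)"
  define M where "M = (\<lambda>t. \<Sum>k<N. \<pi> k *\<^sub>R v k t)"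
  define c where "c = (\<lambda>t k j. (\<pi> k * A k j * \<psi> (norm (x j t - x k t))) *\<^sub>R (v j t - v k t))"
  have anti: "c t j k = - c t k j" if "j < N" "k < N" for t j k
  proof (cases "j = k")
    case True then show ?thesis by (simp add: c_def)
  next
    case False
    have "\<pi> j * A j k = \<pi> k * A k j" using pi_rev[OF that False] .
    moreover have "norm (x k t - x j t) = norm (x j t - x k t)" by (rule norm_minus_commute)
    ultimately show ?thesis unfolding c_def
      by (metis minus_diff_eq scaleR_minus_right)
  qed
  have S0: "(\<Sum>k<N. \<Sum>j<N. c t k j) = 0" for t
  proof -
    have "(\<Sum>k<N. \<Sum>j<N. c t k j) = (\<Sum>j<N. \<Sum>k<N. c t k j)" by (rule sum.swap)
    also have "\<dots> = (\<Sum>j<N. \<Sum>k<N. - c t j k)"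
      by (intro sum.cong refl, rule anti) auto
    also have "\<dots> = - (\<Sum>j<N. \<Sum>k<N. c t j k)" by (simp add: sum_negf)
    finally have "(\<Sum>k<N. \<Sum>j<N. c t k j) = - (\<Sum>k<N. \<Sum>j<N. c t k j)" .
    hence "(2::real) *\<^sub>R (\<Sum>k<N. \<Sum>j<N. c t k j) = 0"
      by (simp add: scaleR_2 eq_neg_iff_add_eq_0)
    thus ?thesis by simp
  qed
  have Deq: "(\<Sum>k<N. \<pi> k *\<^sub>R (\<alpha> *\<^sub>R (\<Sum>j\<in>{..<N} - {k}. (A k j * \<psi> (norm (x j t - x k t))) *\<^sub>R (v j t - v k t)))) = 0" for t
  proof -
    have "\<And>k. (\<Sum>j\<in>{..<N} - {k}. (A k j * \<psi> (norm (x j t - x k t))) *\<^sub>R (v j t - v k t))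
       = (\<Sum>j<N. (A k j * \<psi> (norm (x j t - x k t))) *\<^sub>R (v j t - v k t))"
      by (rule sum.mono_neutral_left) auto
    hence "(\<Sum>k<N. \<pi> k *\<^sub>R (\<alpha> *\<^sub>R (\<Sum>j\<in>{..<N} - {k}. (A k j * \<psi> (norm (x j t - x k t))) *\<^sub>R (v j t - v k t))))
        = \<alpha> *\<^sub>R (\<Sum>k<N. \<Sum>j<N. c t k j)"
      by (simp add: c_def scaleR_sum_right mult_ac)
    thus ?thesis using S0 by simp
  qed
  have dM: "(M has_derivative (\<lambda>h. 0)) (at t within {0..})" if "t \<in> {0..}" for t
  proof -
    have "(M has_vector_derivative (\<Sum>k<N. \<pi> k *\<^sub>R (\<alpha> *\<^sub>R (\<Sum>j\<in>{..<N} - {k}. (A k j * \<psi> (norm (x j t - x k t))) *\<^sub>R (v j t - v k t)))))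
       (at t within {0..})"
      unfolding M_def
      apply (rule has_vector_derivative_sum)
      using has_vector_derivative_scaleR[OF DERIV_const dv, of _ t] that by auto
    thus ?thesis unfolding Deq[of t] has_vector_derivative_def by simp
  qed
  obtain C where C: "\<forall>t\<in>{0..}. M t = C"
    using has_derivative_zero_constant[OF convex_real_interval(1) dM] by blast
  have Mc: "M t = vs" if "t \<ge> 0" for t
    using C that unfolding vs_def by (metis M_def atLeast_iff order_refl)
  define Mx where "Mx = (\<lambda>t. Max {norm (v i t - v j t) | i j. i < N \<and> j < N})"
  have fin: "finite {norm (v i t - v j t) | i j. i < N \<and> j < N}" for t
  proof -
    have "{norm (v i t - v j t) | i j. i < N \<and> j < N} = (\<lambda>(i,j). norm (v i t - v j t)) ` ({..<N} \<times> {..<N})"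
      by auto
    thus ?thesis by simp
  qed
  have leM: "norm (v i t - v j t) \<le> Mx t" if "i < N" "j < N" for i j t
    unfolding Mx_def by (rule Max_ge[OF fin]) (use that in blast)
  show ?thesis
  proof (intro allI impI)
    fix i assume i: "i < N"
    have bound: "norm (v i t - vs) \<le> Mx t" if t: "t \<ge> 0" for t
    proof -
      have "v i t = (\<Sum>k<N. \<pi> k *\<^sub>R v i t)" by (simp add: scaleR_sum_left[symmetric] pi_sum)
      hence "v i t - vs = (\<Sum>k<N. \<pi> k *\<^sub>R (v i t - v k t))"
        using Mc[OF t] by (simp add: M_def scaleR_diff_right sum_subtractf)
      hence "norm (v i t - vs) \<le> (\<Sum>k<N. norm (\<pi> k *\<^sub>R (v i t - v k t)))"
        by (metis norm_sum)
      also have "\<dots> \<le> (\<Sum>k<N. \<pi> k * Mx t)"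
        by (rule sum_mono) (simp add: pi_nonneg leM i mult_left_mono)
      also have "\<dots> = Mx t" by (simp add: sum_distrib_right[symmetric] pi_sum)
      finally show ?thesis .
    qed
    have "(Mx \<longlongrightarrow> 0) at_top" using flock_v unfolding Mx_def .
    moreover have "eventually (\<lambda>t. norm (norm (v i t - vs)) \<le> Mx t) at_top"
      using eventually_ge_at_top[of "0::real"] by eventually_elim (simp add: bound)
    ultimately have "((\<lambda>t. norm (v i t - vs)) \<longlongrightarrow> 0) at_top"
      by (rule Lim_null_comparison[rotated])
    thus "((\<lambda>t. norm (v i t - (\<Sum>k<N. \<pi> k *\<^sub>R v k 0))) \<longlongrightarrow> 0) at_top" by (simp add: vs_def)
  qed
qed

end
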